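(* Let $Y(t)$, $t\in[0,\infty)$, be a solution in $\mathcal{M}_4$ of the rank-4 ODE \[ \dot Y=-P_Y R_\varepsilon(E)+\eta Y,\qquad \eta=\langle P_YR_\varepsilon(E),E\rangle,\qquad E=\Pi_{\mathcal{S}}Y, \] with initial value $Y(0)=Y_0\in\mathrm{Sym}(\mathbb{R}^{n\times n})\cap\mathcal{M}_4$. Assume that along the solution the eigenvalues $\lambda_k$ and $\lambda_{k+1}$ of $L(W+\varepsilon E(t))$ are simple. Then $Y(t)\in\mathrm{Sym}(\mathbb{R}^{n\times n})\cap\mathcal{M}_4$ for all $t$. Moreover, if $\|\Pi_{\mathcal{S}}Y_0\|_F=1$, then $\|\Pi_{\mathcal{S}}Y(t)\|_F=1$ for all $t$.
   Context: Let $\mathscr{E}\subseteq\{1,\dots,n\}^2$ be a symmetric edge set, and let $W\in\mathbb{R}^{n\times n}$ be symmetric, entrywise non-negative, with $w_{ij}=0$ for $(i,j)\notin\mathscr{E}$. Let $L(A)=\mathrm{diag}(A\mathbb{1})-A$ with $\mathbb{1}=(1,\dots,1)^T$. Eigenvalues are ordered $\lambda_1\le\dots\le\lambda_n$. The inner product is $\langle X,Y\rangle=\mathrm{trace}(X^TY)$ and $\|\cdot\|_F$ is the Frobenius norm. Let $\mathcal{S}=\{A: a_{ij}=0\ \forall (i,j)\notin\mathscr{E}\}$, and let $\Pi_{\mathcal{S}}$ be the orthogonal projection onto $\mathcal{S}$ (it zeroes the entries outside $\mathscr{E}$). Let $\mathcal{E}=\mathcal{S}\cap\mathrm{Sym}(\mathbb{R}^{n\times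 n})$. Fix $k\in\{2,\dots,n-1\}$ and $\varepsilon>0$. For $E\in\mathcal{E}$ with $\lambda_k,\lambda_{k+1}$ of $L(W+\varepsilon E)$ simple, let $x$ and $y$ be unit eigenvectors for $\lambda_{k+1}$ and $\lambda_k$ respectively. Set $z=x\bullet x-y\bullet y$ (componentwise product) and $R_\varepsilon(E)=\tfrac12(z\mathbb{1}^T+\mathbb{1}z^T)-xx^T+yy^T$. $\mathcal{M}_4$ is the manifold of real $n\times n$ matrices of rank exactly 4. $P_Y$ is the Frobenius-orthogonal projection onto the tangent space $T_Y\mathcal{M}_4$. For symmetric $Y=USU^T$, with $U\in\mathbb{R}^{n\times 4}$ having orthonormal columns and $S\in\mathrm{Sym}(\mathbb{R}^{4\times4})$ invertible, it is given by $P_YA=A-(I_n-UU^T)A(I_n-UU^T)$. *)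

theory Defs
  imports "HOL-Analysis.Analysis" "HOL-Computational_Algebra.Polynomial"
    "HOL-Library.Multiset"
begin

text \<open>Matrices are n x n real matrices, indexed by a finite type 'n with CARD('n) = n.
  The Frobenius inner product and norm are the library's inner and norm on real^'n^'n.\<close>

definition projS :: "('n \<times> 'n) set \<Rightarrow> real^'n^'n \<Rightarrow> real^'n^'n" where
  "projS Ed A = (\<chi> i j. if (i, j) \<in> Ed then A $ i $ j else 0)"

definition laplacian :: "real^'n^'n \<Rightarrow> real^'n^'n" where
  "laplacian A = (\<chi> i j. (if i = j then (\<Sum>l\<in>UNIV. A $ i $ l) else 0) - A $ i $ j)"

definition charpoly :: "real^'n^'n \<Rightarrow> real poly" where
  "charpoly A = det (\<chi> i j. (if i = j then [:0, 1:] else 0) - [:A $ i $ j:])"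

text \<open>Real eigenvalues counted with algebraic multiplicity, sorted increasingly;
  entry number (k-1) of this list is lambda_k.\<close>
definition eigenvalues :: "real^'n^'n \<Rightarrow> real list" where
  "eigenvalues A = sorted_list_of_multiset (proots (charpoly A))"

definition eig :: "real^'n^'n \<Rightarrow> nat \<Rightarrow> real" where
  "eig A k = eigenvalues A ! (k - 1)"

text \<open>lambda_k is a well-defined (all n eigenvalues real) and simple eigenvalue.\<close>
definition eig_simple :: "real^'n^'n \<Rightarrow> nat \<Rightarrow> bool" where
  "eig_simple A k \<longleftrightarrow> length (eigenvalues A) = CARD('n) \<and> 1 \<le> k \<and> k \<le> CARD('n)
     \<and> order (eig A k) (charpoly A) = 1"

definition unit_eigvec :: "real^'n^'n \<Rightarrow> real \<Rightarrow> real^'n" where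
  "unit_eigvec A lam = (SOME x. norm x = 1 \<and> A *v x = lam *\<^sub>R x)"

definition Rmat :: "real^'n^'n \<Rightarrow> nat \<Rightarrow> real \<Rightarrow> real^'n^'n \<Rightarrow> real^'n^'n" where
  "Rmat W k \<epsilon> E =
    (let M = laplacian (W + \<epsilon> *\<^sub>R E);
         x = unit_eigvec M (eig M (k + 1));
         y = unit_eigvec M (eig M k);
         z = (\<chi> i. x $ i * x $ i - y $ i * y $ i)
     in (\<chi> i j. (z $ i + z $ j) / 2 - x $ i * x $ j + y $ i * y $ j))"

text \<open>Orthogonal projector onto the column space of Y.\<close>
definition colproj :: "real^'n^'n \<Rightarrow> real^'n^'n" where
  "colproj Y = (THE P. transpose P = P \<and> P ** P = P \<and> range ((*v) P) = range ((*v) Y))"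

text \<open>Orthogonal projection onto the tangent space of the fixed-rank manifold at Y:
  P_Y A = A - (I - U U^T) A (I - V V^T), U, V orthonormal bases of column and row space.\<close>
definition tangent_proj :: "real^'n^'n \<Rightarrow> real^'n^'n \<Rightarrow> real^'n^'n" where
  "tangent_proj Y A = A - (mat 1 - colproj Y) ** A ** (mat 1 - colproj (transpose Y))"

end

theory Submission
  imports Defs
begin

(* ---- W1 ---- *)


declare transpose_matrix_vector[simp del] vector_transpose_matrix[simp del]

lemma norm_sq_mat:
  fixes M :: "real^'n^'m"
  shows "(norm M)^2 = (\<Sum>i\<in>UNIV. \<Sum>j\<in>UNIV. (M$i$j)^2)"
  unfolding power2_norm_eq_inner by (simp add: inner_vec_def power2_eq_square)

lemma norm_transpose_mat:
  fixes M :: "real^'n^'m"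
  shows "norm (transpose M) = norm M"
proof -
  have "(norm (transpose M))^2 = (norm M)^2"
    unfolding norm_sq_mat by (subst sum.swap) (simp add: transpose_def)
  then show ?thesis by (simp add: power2_eq_iff_nonneg)
qed

lemma norm_le_sum_rows:
  fixes M :: "real^'n^'m"
  shows "norm M \<le> (\<Sum>i\<in>UNIV. norm (M$i))"
  unfolding norm_vec_def by (rule L2_set_le_sum) auto

lemma norm_mv_le:
  fixes M :: "real^'n^'m"
  shows "norm (M *v x) \<le> real CARD('m) * norm M * norm x"
proof -
  have "norm (M *v x) \<le> (\<Sum>i\<in>UNIV. \<bar>(M *v x)$i\<bar>)" by (rule norm_le_l1_cart)
  also have "\<dots> \<le> (\<Sum>i\<in>(UNIV::'m set). norm M * norm x)"
  proof (rule sum_mono)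
    fix i :: 'm
    have "(M *v x)$i = inner (M$i) x"
      by (simp add: matrix_vector_mult_def inner_vec_def mult.commute)
    then have "\<bar>(M *v x)$i\<bar> \<le> norm (M$i) * norm x" using Cauchy_Schwarz_ineq2 by simp
    also have "\<dots> \<le> norm M * norm x"
    proof -
      have "norm (M$i) \<le> norm M" unfolding norm_vec_def by (rule member_le_L2_set) simp_all
      then show ?thesis by (simp add: mult_right_mono)
    qed
    finally show "\<bar>(M *v x)$i\<bar> \<le> norm M * norm x" .
  qed
  finally show ?thesis by simp
qed

lemma norm_le_sum_cols:
  fixes M :: "real^'n^'m"
  shows "norm M \<le> (\<Sum>j\<in>UNIV. norm (M *v axis j 1))"
proof -
  have "norm M = norm (transpose M)" by (simp add: norm_transpose_mat)
  also have "\<dots> \<le> (\<Sum>j\<in>UNIV. norm (transpose M $ j))" by (rule norm_le_sum_rows)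
  also have "\<dots> = (\<Sum>j\<in>UNIV. norm (M *v axis j 1))"
    by (simp add: matrix_vector_mult_basis column_def transpose_def)
  finally show ?thesis .
qed

lemma norm_from_op:
  fixes M :: "real^'n^'m"
  assumes "\<And>x. norm (M *v x) \<le> c * norm x"
  shows "norm M \<le> real CARD('n) * c"
proof -
  have "norm M \<le> (\<Sum>j\<in>UNIV. norm (M *v axis j 1))" by (rule norm_le_sum_cols)
  also have "\<dots> \<le> (\<Sum>j\<in>(UNIV::'n set). c)"
    by (rule sum_mono) (use assms[of "axis _ 1"] in \<open>simp\<close>)
  finally show ?thesis by simp
qed

lemma inner_mv_transpose:
  fixes A :: "real^'n^'m"
  shows "inner (transpose A *v y) x = inner y (A *v x)"
  by (simp add: transpose_matrix_vector dot_lmul_matrix)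

lemma norm_le_sum_abs_entries:
  fixes M :: "real^'n^'m"
  shows "norm M \<le> (\<Sum>i\<in>UNIV. \<Sum>j\<in>UNIV. \<bar>M$i$j\<bar>)"
proof -
  have "norm M \<le> (\<Sum>i\<in>UNIV. norm (M$i))" by (rule norm_le_sum_rows)
  also have "\<dots> \<le> (\<Sum>i\<in>UNIV. \<Sum>j\<in>UNIV. \<bar>M$i$j\<bar>)"
    by (rule sum_mono) (rule norm_le_l1_cart)
  finally show ?thesis .
qed


(* ---- W2a ---- *)


lemma subspace_fix:
  fixes P :: "real^'n^'n"
  shows "subspace {x. P *v x = x}"
  unfolding subspace_def by (auto simp: algebra_simps)

lemma subspace_range_mv:
  fixes P :: "real^'n^'m"
  shows "subspace (range ((*v) P))"
  unfolding subspace_def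
proof (intro conjI ballI allI)
  show "0 \<in> range ((*v) P)" by (metis matrix_vector_mult_0_right rangeI)
  fix a b assume "a \<in> range ((*v) P)" "b \<in> range ((*v) P)"
  then obtain u v where "a = P *v u" "b = P *v v" by blast
  then show "a + b \<in> range ((*v) P)" by (metis matrix_vector_right_distrib rangeI)
next
  fix c a assume "a \<in> range ((*v) P)"
  then obtain u where "a = P *v u" by blast
  then show "c *\<^sub>R a \<in> range ((*v) P)" by (metis matrix_vector_mult_scaleR rangeI)
qed

lemma ex_orth_proj:
  fixes S :: "(real^'n) set"
  assumes "subspace S"
  shows "\<exists>P::real^'n^'n. transpose P = P \<and> P ** P = P \<and> range ((*v) P) = S"
proof -
  obtain B where B: "B \<subseteq> S" "pairwise orthogonal B" "\<And>x. x \<in> B \<Longrightarrow> norm x = 1"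
    "independent B" "card B = dim S" "span B = S"
    using orthonormal_basis_subspace[OF assms] by metis
  have finB: "finite B" using B(4) independent_imp_finite by blast
  define P :: "real^'n^'n" where "P = (\<chi> i j. \<Sum>b\<in>B. b$i * b$j)"
  have Pv: "P *v x = (\<Sum>b\<in>B. inner b x *\<^sub>R b)" for x
  proof -
    have "(P *v x)$i = (\<Sum>b\<in>B. inner b x *\<^sub>R b)$i" for i
    proof -
      have "(P *v x)$i = (\<Sum>j\<in>UNIV. (\<Sum>b\<in>B. b$i * b$j) * x$j)"
        unfolding P_def matrix_vector_mult_def by simp
      also have "\<dots> = (\<Sum>j\<in>UNIV. \<Sum>b\<in>B. b$i * b$j * x$j)"
        by (simp add: sum_distrib_right)
      also have "\<dots> = (\<Sum>b\<in>B. \<Sum>j\<in>UNIV. b$i * b$j * x$j)"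
        by (rule sum.swap)
      also have "\<dots> = (\<Sum>b\<in>B. inner b x * b$i)"
        by (simp add: inner_vec_def sum_distrib_left sum_distrib_right mult.commute mult.left_commute)
      also have "\<dots> = (\<Sum>b\<in>B. inner b x *\<^sub>R b)$i"
        by (simp add: sum_component)
      finally show ?thesis .
    qed
    then show ?thesis by (simp add: vec_eq_iff)
  qed
  have Pb: "P *v b = b" if "b \<in> B" for b
  proof -
    have "P *v b = inner b b *\<^sub>R b + (\<Sum>c\<in>B-{b}. inner c b *\<^sub>R c)"
      using Pv finB that by (simp add: sum.remove)
    also have "(\<Sum>c\<in>B-{b}. inner c b *\<^sub>R c) = 0"
      using B(2) that by (intro sum.neutral) (auto simp: pairwise_def orthogonal_def)
    also have "inner b b = 1" using B(3)[OF that] by (simp add: norm_eq_sqrt_inner)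
    finally show ?thesis by simp
  qed
  have fixS: "P *v x = x" if "x \<in> S" for x
  proof -
    have "span B \<subseteq> {x. P *v x = x}" by (rule span_minimal) (use Pb subspace_fix in auto)
    then show ?thesis using that B(6) by auto
  qed
  have rngS: "P *v x \<in> S" for x
    unfolding Pv using B(1) assms by (intro subspace_sum subspace_scale) auto
  have sym: "transpose P = P" unfolding P_def transpose_def by (simp add: mult.commute)
  have idem: "P ** P = P"
    by (simp add: matrix_eq matrix_vector_mul_assoc[symmetric] fixS rngS)
  have "range ((*v) P) = S"
  proof
    show "range ((*v) P) \<subseteq> S" using rngS by auto
    show "S \<subseteq> range ((*v) P)" using fixS by (metis image_eqI rangeI subsetI)
  qed
  then show ?thesis using sym idem by blast
qed


(* ---- W2 ---- *)


lemma proj_mult_fix: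
  fixes P Q :: "real^'n^'n"
  assumes "Q ** Q = Q" "range ((*v) P) \<subseteq> range ((*v) Q)"
  shows "Q ** P = P"
  unfolding matrix_eq
proof
  fix x
  obtain z where z: "P *v x = Q *v z" using assms(2) by blast
  have "Q *v (P *v x) = P *v x"
    unfolding z matrix_vector_mul_assoc assms(1) ..
  then show "(Q ** P) *v x = P *v x" by (simp add: matrix_vector_mul_assoc)
qed

lemma proj_unique:
  fixes P Q :: "real^'n^'n"
  assumes "transpose P = P" "P ** P = P" "transpose Q = Q" "Q ** Q = Q"
    "range ((*v) P) = range ((*v) Q)"
  shows "P = Q"
proof -
  have 1: "Q ** P = P" by (rule proj_mult_fix) (use assms in auto)
  have 2: "P ** Q = Q" by (rule proj_mult_fix) (use assms in auto)
  have "P = transpose (Q ** P)" using 1 assms(1) by metis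
  also have "\<dots> = P ** Q" by (simp add: matrix_transpose_mul assms(1,3))
  finally show ?thesis using 2 by metis
qed

lemma colproj_props:
  fixes Y :: "real^'n^'n"
  shows "transpose (colproj Y) = colproj Y \<and> colproj Y ** colproj Y = colproj Y
     \<and> range ((*v) (colproj Y)) = range ((*v) Y)"
proof -
  obtain P :: "real^'n^'n" where P: "transpose P = P \<and> P ** P = P \<and> range ((*v) P) = range ((*v) Y)"
    using ex_orth_proj[OF subspace_range_mv[of Y]] by blast
  show ?thesis unfolding colproj_def
  proof (rule theI[of _ P])
    show "transpose P = P \<and> P ** P = P \<and> range ((*v) P) = range ((*v) Y)" by (rule P)
    fix Q :: "real^'n^'n" assume "transpose Q = Q \<and> Q ** Q = Q \<and> range ((*v) Q) = range ((*v) Y)"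
    then show "Q = P" using P by - (rule proj_unique, simp_all)
  qed
qed

lemmas colproj_sym = colproj_props[THEN conjunct1]
lemmas colproj_idem = colproj_props[THEN conjunct2, THEN conjunct1]
lemmas colproj_range = colproj_props[THEN conjunct2, THEN conjunct2]

lemma colproj_fix: "colproj Y ** Y = (Y::real^'n^'n)"
  by (rule proj_mult_fix[OF colproj_idem]) (simp add: colproj_range)

lemma proj_norm_le:
  fixes P :: "real^'n^'n"
  assumes "transpose P = P" "P ** P = P"
  shows "norm (P *v x) \<le> norm x"
proof -
  have "(norm (P *v x))^2 = inner (P *v x) (P *v x)" by (simp add: power2_norm_eq_inner)
  also have "\<dots> = inner x (P *v (P *v x))"
    using inner_mv_transpose[of P "P *v x" x, unfolded assms(1)] by (simp add: inner_commute)
  also have "\<dots> = inner x (P *v x)" by (simp add: matrix_vector_mul_assoc assms(2))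
  also have "\<dots> \<le> norm x * norm (P *v x)" by (rule norm_cauchy_schwarz)
  finally have "norm (P *v x) * norm (P *v x) \<le> norm x * norm (P *v x)"
    by (simp add: power2_eq_square)
  then show ?thesis
    by (cases "norm (P *v x) = 0") (auto simp: mult_le_cancel_right)
qed

lemma compl_proj:
  fixes P :: "real^'n^'n"
  assumes "transpose P = P" "P ** P = P"
  shows "transpose (mat 1 - P) = mat 1 - P" "(mat 1 - P) ** (mat 1 - P) = mat 1 - P"
proof -
  show "transpose (mat 1 - P) = mat 1 - P"
  proof -
    have "transpose (mat 1 - P) = transpose (mat 1) - transpose P"
      by (simp add: transpose_def vec_eq_iff)
    then show ?thesis using assms(1) by (simp add: transpose_mat)
  qed
  show "(mat 1 - P) ** (mat 1 - P) = mat 1 - P"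
  proof -
    have PP: "P *v (P *v x) = P *v x" for x using assms(2) by (simp add: matrix_vector_mul_assoc)
    have "(mat 1 - P) *v ((mat 1 - P) *v x) = (mat 1 - P) *v x" for x
      by (simp add: algebra_simps PP)
    then show ?thesis by (simp add: matrix_eq matrix_vector_mul_assoc)
  qed
qed

lemma colproj_norm: "norm (colproj Y *v x) \<le> norm (x::real^'n)"
  for Y :: "real^'n^'n"
  by (rule proj_norm_le) (use colproj_props in auto)

lemma colproj_compl_norm: "norm ((mat 1 - colproj Y) *v x) \<le> norm (x::real^'n)"
  for Y :: "real^'n^'n"
  by (rule proj_norm_le; rule compl_proj) (use colproj_props in auto)


(* ---- W3 ---- *)


lemma unif_rinv:
  fixes Z0 :: "real^'n^'n"
  shows "\<exists>\<delta>>0. \<exists>C\<ge>0. \<forall>Z. rank Z = rank Z0 \<and> norm (Z - Z0) < \<delta> \<longrightarrow>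
           (\<forall>v\<in>range ((*v) Z). \<exists>u. Z *v u = v \<and> norm u \<le> C * norm v)"
proof -
  define B where "B = range ((*v) (transpose Z0))"
  have subB: "subspace B" unfolding B_def by (rule subspace_range_mv)
  have inj0: "\<forall>x\<in>B. Z0 *v x = 0 \<longrightarrow> x = 0"
  proof (intro ballI impI)
    fix x assume "x \<in> B" "Z0 *v x = 0"
    then obtain y where y: "x = transpose Z0 *v y" unfolding B_def by blast
    have "inner x x = inner (transpose Z0 *v y) x" using y by simp
    also have "\<dots> = inner y (Z0 *v x)" by (rule inner_mv_transpose)
    finally have "inner x x = inner y (Z0 *v x)" .
    then show "x = 0" using \<open>Z0 *v x = 0\<close> by simp
  qed
  obtain e where e: "e > 0" "\<forall>x\<in>B. norm (Z0 *v x) \<ge> e * norm x"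
    using injective_imp_isometric[OF closed_subspace[OF subB] subB matrix_vector_mul_bounded_linear inj0]
    by blast
  define K where "K = real CARD('n)"
  have K: "K \<ge> 1" unfolding K_def by simp
  define \<delta> where "\<delta> = e / (2 * K)"
  have \<delta>: "\<delta> > 0" unfolding \<delta>_def using e K by simp
  have "\<forall>Z. rank Z = rank Z0 \<and> norm (Z - Z0) < \<delta> \<longrightarrow>
           (\<forall>v\<in>range ((*v) Z). \<exists>u. Z *v u = v \<and> norm u \<le> (2/e) * norm v)"
  proof (intro allI impI ballI)
    fix Z :: "real^'n^'n" and v
    assume Z: "rank Z = rank Z0 \<and> norm (Z - Z0) < \<delta>" and v: "v \<in> range ((*v) Z)"
    have low: "norm (Z *v x) \<ge> (e/2) * norm x" if "x \<in> B" for x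
    proof -
      have "norm ((Z - Z0) *v x) \<le> K * norm (Z - Z0) * norm x"
        unfolding K_def by (rule norm_mv_le)
      also have "\<dots> \<le> K * \<delta> * norm x"
        using Z K by (intro mult_right_mono mult_left_mono) auto
      also have "\<dots> = (e/2) * norm x" unfolding \<delta>_def using K by simp
      finally have 1: "norm ((Z - Z0) *v x) \<le> (e/2) * norm x" .
      have "Z *v x = Z0 *v x + (Z - Z0) *v x" by (simp add: algebra_simps)
      then have "norm (Z0 *v x) \<le> norm (Z *v x) + norm ((Z - Z0) *v x)"
        by (metis add_diff_cancel_right' norm_triangle_ineq4)
      moreover have "e * norm x \<le> norm (Z0 *v x)" using e(2) that by blast
      ultimately show ?thesis using 1 by linarith
    qed
    have injZ: "inj_on ((*v) Z) (span B)"
    proof (rule inj_onI)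
      fix x y assume xy: "x \<in> span B" "y \<in> span B" "Z *v x = Z *v y"
      have "span B = B" using subB by (simp add: span_eq_iff)
      then have "x - y \<in> B" using xy subB by (metis subspace_diff)
      moreover have "Z *v (x - y) = 0" using xy by (simp add: algebra_simps)
      ultimately have "(e/2) * norm (x - y) \<le> 0" using low by fastforce
      then show "x = y" using e by (simp add: mult_le_0_iff)
    qed
    have "dim ((*v) Z ` B) = dim B"
      by (rule dim_image_eq[OF matrix_vector_mul_linear injZ])
    also have "dim B = rank (transpose Z0)" unfolding B_def rank_dim_range by simp
    also have "\<dots> = rank Z" using Z by (simp add: rank_transpose)
    also have "\<dots> = dim (range ((*v) Z))" unfolding rank_dim_range by simp
    finally have dimeq: "dim ((*v) Z ` B) = dim (range ((*v) Z))" .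
    have "(*v) Z ` B = range ((*v) Z)"
      by (rule subspace_dim_equal)
        (use dimeq subB subspace_range_mv[of Z] linear_subspace_image[OF matrix_vector_mul_linear] in auto)
    then obtain x where x: "x \<in> B" "v = Z *v x" using v by auto
    have "norm x \<le> (2/e) * norm v"
      using low[OF x(1)] e x(2) by (simp add: field_simps)
    then show "\<exists>u. Z *v u = v \<and> norm u \<le> (2/e) * norm v" using x by blast
  qed
  then show ?thesis using \<delta> e by (intro exI[of _ \<delta>] conjI exI[of _ "2/e"]) auto
qed


(* ---- W4 ---- *)



lemma skew_bound:
  fixes Y :: "real^'n^'n"
  assumes inv: "\<forall>v\<in>range ((*v) (transpose Y)). \<exists>u. transpose Y *v u = v \<and> norm u \<le> C * norm v"
    and C: "C \<ge> 0"
  shows "norm ((mat 1 - colproj Y) *v (colproj (transpose Y) *v x))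
           \<le> real CARD('n) * norm (Y - transpose Y) * C * norm x"
proof -
  define v where "v = colproj (transpose Y) *v x"
  have "v \<in> range ((*v) (transpose Y))" unfolding v_def using colproj_range by blast
  then obtain u where u: "transpose Y *v u = v" "norm u \<le> C * norm v" using inv by blast
  have z: "(mat 1 - colproj Y) *v (Y *v u) = 0"
  proof -
    have "colproj Y *v (Y *v u) = Y *v u" by (simp add: matrix_vector_mul_assoc colproj_fix)
    then show ?thesis by (simp add: matrix_vector_mult_diff_rdistrib)
  qed
  have "(mat 1 - colproj Y) *v v = (mat 1 - colproj Y) *v ((transpose Y - Y) *v u) + (mat 1 - colproj Y) *v (Y *v u)"
    unfolding u(1)[symmetric] by (simp add: algebra_simps)
  also have "\<dots> = (mat 1 - colproj Y) *v ((transpose Y - Y) *v u)" using z by simp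
  finally have "norm ((mat 1 - colproj Y) *v v) \<le> norm ((transpose Y - Y) *v u)"
    using colproj_compl_norm by metis
  also have "\<dots> \<le> real CARD('n) * norm (transpose Y - Y) * norm u" by (rule norm_mv_le)
  also have "\<dots> \<le> real CARD('n) * norm (transpose Y - Y) * (C * norm x)"
  proof -
    have "norm v \<le> norm x" unfolding v_def by (rule colproj_norm)
    then have "norm u \<le> C * norm x" using u(2) C by (meson mult_left_mono order_trans)
    then show ?thesis by (intro mult_left_mono) auto
  qed
  also have "norm (transpose Y - Y) = norm (Y - transpose Y)" by (simp add: norm_minus_commute)
  finally show ?thesis unfolding v_def by (simp add: mult.assoc)
qed


lemma transpose_diff_mat: "transpose (A - B) = transpose A - transpose (B::real^'n^'n)"
  by (simp add: transpose_def vec_eq_iff)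
lemma transpose_mat1: "transpose (mat 1 :: real^'n^'n) = mat 1"
  by (simp add: transpose_mat)

lemma delta_bound:
  fixes Y :: "real^'n^'n"
  assumes inv1: "\<forall>v\<in>range ((*v) (transpose Y)). \<exists>u. transpose Y *v u = v \<and> norm u \<le> C * norm v"
    and inv2: "\<forall>v\<in>range ((*v) Y). \<exists>u. Y *v u = v \<and> norm u \<le> C * norm v"
    and C: "C \<ge> 0"
  shows "norm ((colproj Y - colproj (transpose Y)) *v x)
           \<le> (2 * real CARD('n)^3 * C) * norm (Y - transpose Y) * norm x"
proof -
  let ?K = "real CARD('n)"
  let ?P = "colproj Y" and ?Q = "colproj (transpose Y)" and ?a = "norm (Y - transpose Y)"
  have K1: "?K \<ge> 1" by simp
  have b1: "norm ((mat 1 - ?P) *v (?Q *v w)) \<le> ?K * ?a * C * norm w" for w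
    by (rule skew_bound[OF inv1 C])
  have b2: "norm ((mat 1 - ?Q) *v (?P *v w)) \<le> ?K * ?a * C * norm w" for w
  proof -
    have "norm ((mat 1 - ?Q) *v (colproj (transpose (transpose Y)) *v w))
       \<le> ?K * norm (transpose Y - transpose (transpose Y)) * C * norm w"
      by (rule skew_bound) (use inv2 C in auto)
    then show ?thesis by (simp add: norm_minus_commute)
  qed
  have fr: "norm ((mat 1 - ?Q) ** ?P) \<le> ?K * (?K * ?a * C)"
    by (rule norm_from_op) (use b2 in \<open>simp add: matrix_vector_mul_assoc[symmetric]\<close>)
  have tr: "transpose ((mat 1 - ?Q) ** ?P) = ?P ** (mat 1 - ?Q)"
    by (simp add: matrix_transpose_mul colproj_sym transpose_diff_mat transpose_mat1)
  have b3: "norm (?P *v ((mat 1 - ?Q) *v w)) \<le> ?K * (?K * (?K * ?a * C)) * norm w" for w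
  proof -
    have "norm (?P *v ((mat 1 - ?Q) *v w)) = norm (transpose ((mat 1 - ?Q) ** ?P) *v w)"
      by (simp add: tr matrix_vector_mul_assoc)
    also have "\<dots> \<le> ?K * norm (transpose ((mat 1 - ?Q) ** ?P)) * norm w" by (rule norm_mv_le)
    also have "\<dots> \<le> ?K * (?K * (?K * ?a * C)) * norm w"
      using fr by (simp add: norm_transpose_mat mult_left_mono mult_right_mono)
    finally show ?thesis .
  qed
  have eq: "(?P - ?Q) *v x = ?P *v ((mat 1 - ?Q) *v x) - (mat 1 - ?P) *v (?Q *v x)"
    by (simp add: algebra_simps)
  have "norm ((?P - ?Q) *v x) \<le> norm (?P *v ((mat 1 - ?Q) *v x)) + norm ((mat 1 - ?P) *v (?Q *v x))"
    unfolding eq by (rule norm_triangle_ineq4)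
  also have "\<dots> \<le> ?K * (?K * (?K * ?a * C)) * norm x + ?K * ?a * C * norm x"
    by (rule add_mono[OF b3 b1])
  also have "\<dots> \<le> (2 * ?K^3 * C) * ?a * norm x"
  proof -
    have "?K * ?a * C * norm x \<le> ?K^3 * ?a * C * norm x"
    proof -
      have kk: "1 \<le> ?K * ?K" using mult_mono[OF K1 K1] by simp
      have "?K \<le> ?K^3" using mult_left_mono[OF kk, of ?K] by (simp add: power3_eq_cube mult.assoc)
      then show ?thesis using C by (intro mult_right_mono) auto
    qed
    then show ?thesis by (simp add: power3_eq_cube algebra_simps)
  qed
  finally show ?thesis .
qed


(* ---- W5 ---- *)


lemma T_op:
  fixes Y R :: "real^'n^'n"
  shows "norm (tangent_proj Y R *v x) \<le> (2 * real CARD('n) * norm R) * norm x"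
proof -
  let ?K = "real CARD('n)"
  have e: "tangent_proj Y R *v x = R *v x - (mat 1 - colproj Y) *v (R *v ((mat 1 - colproj (transpose Y)) *v x))"
    unfolding tangent_proj_def by (simp add: matrix_vector_mult_diff_rdistrib matrix_vector_mul_assoc[symmetric])
  have "norm ((mat 1 - colproj Y) *v (R *v ((mat 1 - colproj (transpose Y)) *v x)))
        \<le> norm (R *v ((mat 1 - colproj (transpose Y)) *v x))" by (rule colproj_compl_norm)
  also have "\<dots> \<le> ?K * norm R * norm ((mat 1 - colproj (transpose Y)) *v x)" by (rule norm_mv_le)
  also have "\<dots> \<le> ?K * norm R * norm x" by (intro mult_left_mono colproj_compl_norm) auto
  finally have 1: "norm ((mat 1 - colproj Y) *v (R *v ((mat 1 - colproj (transpose Y)) *v x))) \<le> ?K * norm R * norm x" .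
  have 2: "norm (R *v x) \<le> ?K * norm R * norm x" by (rule norm_mv_le)
  have "norm (tangent_proj Y R *v x) \<le> norm (R *v x) + norm ((mat 1 - colproj Y) *v (R *v ((mat 1 - colproj (transpose Y)) *v x)))"
    unfolding e by (rule norm_triangle_ineq4)
  also have "\<dots> \<le> (2 * ?K * norm R) * norm x" using 1 2 by simp
  finally show ?thesis .
qed

lemma T_norm:
  fixes Y R :: "real^'n^'n"
  shows "norm (tangent_proj Y R) \<le> real CARD('n) * (2 * real CARD('n) * norm R)"
  by (rule norm_from_op) (rule T_op)

lemma TT_eq:
  fixes Y R :: "real^'n^'n"
  assumes R: "transpose R = R"
  shows "(tangent_proj Y R - transpose (tangent_proj Y R)) *v x =
     (colproj Y - colproj (transpose Y)) *v (R *v ((mat 1 - colproj Y) *v x))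
     - (mat 1 - colproj Y) *v (R *v ((colproj Y - colproj (transpose Y)) *v x))"
proof -
  let ?P = "colproj Y" and ?Q = "colproj (transpose Y)"
  have tP: "transpose (mat 1 - ?P) = mat 1 - ?P" by (rule compl_proj) (use colproj_props in auto)
  have tQ: "transpose (mat 1 - ?Q) = mat 1 - ?Q" by (rule compl_proj) (use colproj_props in auto)
  have tT: "transpose (tangent_proj Y R) = R - (mat 1 - ?Q) ** R ** (mat 1 - ?P)"
    unfolding tangent_proj_def transpose_diff_mat matrix_transpose_mul R
    by (simp add: matrix_mul_assoc colproj_sym transpose_mat1)
  show ?thesis
    unfolding tT unfolding tangent_proj_def
    by (simp add: matrix_vector_mult_diff_rdistrib matrix_vector_mul_assoc[symmetric]
        algebra_simps)
qed

lemma TT_bound: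
  fixes Y R :: "real^'n^'n"
  assumes R: "transpose R = R"
    and D: "\<And>x. norm ((colproj Y - colproj (transpose Y)) *v x) \<le> d * norm x"
  shows "norm (tangent_proj Y R - transpose (tangent_proj Y R))
           \<le> real CARD('n) * (2 * d * real CARD('n) * norm R)"
proof (rule norm_from_op)
  fix x
  let ?K = "real CARD('n)"
  let ?P = "colproj Y" and ?Q = "colproj (transpose Y)"
  have "0 \<le> d * norm (axis (undefined::'n) (1::real))" by (rule order_trans[OF norm_ge_zero D])
  then have d0: "d \<ge> 0" by simp
  have 1: "norm ((?P - ?Q) *v (R *v ((mat 1 - ?P) *v x))) \<le> d * (?K * norm R * norm x)"
  proof -
    have "norm ((?P - ?Q) *v (R *v ((mat 1 - ?P) *v x))) \<le> d * norm (R *v ((mat 1 - ?P) *v x))" by (rule D)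
    also have "norm (R *v ((mat 1 - ?P) *v x)) \<le> ?K * norm R * norm ((mat 1 - ?P) *v x)" by (rule norm_mv_le)
    also have "\<dots> \<le> ?K * norm R * norm x" by (intro mult_left_mono colproj_compl_norm) auto
    finally show ?thesis using d0 by (simp add: mult_left_mono)
  qed
  have 2: "norm ((mat 1 - ?P) *v (R *v ((?P - ?Q) *v x))) \<le> ?K * norm R * (d * norm x)"
  proof -
    have "norm ((mat 1 - ?P) *v (R *v ((?P - ?Q) *v x))) \<le> norm (R *v ((?P - ?Q) *v x))" by (rule colproj_compl_norm)
    also have "\<dots> \<le> ?K * norm R * norm ((?P - ?Q) *v x)" by (rule norm_mv_le)
    also have "\<dots> \<le> ?K * norm R * (d * norm x)" by (intro mult_left_mono D) auto
    finally show ?thesis .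
  qed
  have "norm ((tangent_proj Y R - transpose (tangent_proj Y R)) *v x)
    \<le> norm ((?P - ?Q) *v (R *v ((mat 1 - ?P) *v x))) + norm ((mat 1 - ?P) *v (R *v ((?P - ?Q) *v x)))"
    unfolding TT_eq[OF R] by (rule norm_triangle_ineq4)
  also have "\<dots> \<le> (2 * d * ?K * norm R) * norm x" using 1 2 by (simp add: algebra_simps)
  finally show "norm ((tangent_proj Y R - transpose (tangent_proj Y R)) *v x) \<le> (2 * d * ?K * norm R) * norm x" .
qed

lemma Rmat_sym: "transpose (Rmat W k \<epsilon> E) = Rmat W k \<epsilon> (E::real^'n^'n)"
  unfolding Rmat_def Let_def transpose_def by (simp add: vec_eq_iff algebra_simps)

lemma aux_abs4:
  fixes a b c d p q :: real
  assumes "0 \<le> a" "a \<le> 1" "0 \<le> b" "b \<le> 1" "0 \<le> c" "c \<le> 1" "0 \<le> d" "d \<le> 1"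
    "\<bar>p\<bar> \<le> 1" "\<bar>q\<bar> \<le> 1"
  shows "\<bar>(a - b + (c - d))/2 - p + q\<bar> \<le> 4"
proof -
  have h: "(a - b + (c - d))/2 \<le> 1" "-1 \<le> (a - b + (c - d))/2" using assms by simp_all
  show ?thesis unfolding abs_le_iff using assms h unfolding abs_le_iff by (intro conjI; linarith)
qed

lemma Rmat_bound:
  fixes W E :: "real^'n^'n"
  assumes "norm (unit_eigvec (laplacian (W + \<epsilon> *\<^sub>R E)) (eig (laplacian (W + \<epsilon> *\<^sub>R E)) (k+1))) = 1"
    and "norm (unit_eigvec (laplacian (W + \<epsilon> *\<^sub>R E)) (eig (laplacian (W + \<epsilon> *\<^sub>R E)) k)) = 1"
  shows "norm (Rmat W k \<epsilon> E) \<le> 4 * real CARD('n) * real CARD('n)"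
proof -
  define x where "x = unit_eigvec (laplacian (W + \<epsilon> *\<^sub>R E)) (eig (laplacian (W + \<epsilon> *\<^sub>R E)) (k+1))"
  define y where "y = unit_eigvec (laplacian (W + \<epsilon> *\<^sub>R E)) (eig (laplacian (W + \<epsilon> *\<^sub>R E)) k)"
  have x1: "\<bar>x$i\<bar> \<le> 1" for i using component_le_norm_cart[of x i] assms(1) x_def by simp
  have y1: "\<bar>y$i\<bar> \<le> 1" for i using component_le_norm_cart[of y i] assms(2) y_def by simp
  have xx: "\<bar>x$i * x$j\<bar> \<le> 1" for i j using x1[of i] x1[of j] by (simp add: abs_mult mult_le_one)
  have yy: "\<bar>y$i * y$j\<bar> \<le> 1" for i j using y1[of i] y1[of j] by (simp add: abs_mult mult_le_one)
  have ent: "\<bar>Rmat W k \<epsilon> E $ i $ j\<bar> \<le> 4" for i j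
  proof -
    have e: "Rmat W k \<epsilon> E $ i $ j = ((x$i*x$i - y$i*y$i) + (x$j*x$j - y$j*y$j))/2 - x$i*x$j + y$i*y$j"
      unfolding Rmat_def Let_def x_def y_def by simp
    show ?thesis unfolding e using xx[of i i] xx[of j j] yy[of i i] yy[of j j] xx[of i j] yy[of i j]
        zero_le_square[of "x$i"] zero_le_square[of "x$j"] zero_le_square[of "y$i"] zero_le_square[of "y$j"]
      by (intro aux_abs4) auto
  qed
  have "norm (Rmat W k \<epsilon> E) \<le> (\<Sum>i\<in>UNIV. \<Sum>j\<in>UNIV. \<bar>Rmat W k \<epsilon> E $ i $ j\<bar>)"
    by (rule norm_le_sum_abs_entries)
  also have "\<dots> \<le> (\<Sum>i\<in>(UNIV::'n set). \<Sum>j\<in>(UNIV::'n set). 4)"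
    by (intro sum_mono ent)
  finally show ?thesis by simp
qed


(* ---- W6 ---- *)


lemma poly_charpoly:
  fixes A :: "real^'n^'n"
  shows "poly (charpoly A) lam = det (lam *\<^sub>R mat 1 - A)"
proof -
  have "poly (charpoly A) lam =
     (\<Sum>p | p permutes UNIV. of_int (sign p) * (\<Prod>i\<in>UNIV. (if i = p i then lam else 0) - A $ i $ p i))"
  proof -
    have e: "\<And>i j. poly ((if i = j then [:0,1:] else 0) - [:A$i$j:]) lam = (if i=j then lam else 0) - A$i$j"
      by simp
    show ?thesis
      unfolding charpoly_def det_def
      by (simp only: poly_sum poly_mult poly_of_int poly_prod vec_lambda_beta e)
  qed
  also have "\<dots> = det (lam *\<^sub>R mat 1 - A)"
  proof -
    have h: "\<And>b. lam * (if b then 1 else 0) = (if b then lam else (0::real))" by simp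
    show ?thesis unfolding det_def by (simp add: mat_def h)
  qed
  finally show ?thesis .
qed

lemma eigvec_from_root:
  fixes A :: "real^'n^'n"
  assumes "poly (charpoly A) lam = 0"
  shows "\<exists>x. x \<noteq> 0 \<and> A *v x = lam *\<^sub>R x"
proof -
  let ?B = "lam *\<^sub>R mat 1 - A"
  have "det ?B = 0" using assms poly_charpoly by metis
  then have "\<not> inj ((*v) ?B)" by (simp add: det_eq_0_rank less_rank_noninjective)
  then obtain u v where uv: "u \<noteq> v" "?B *v u = ?B *v v" unfolding inj_def by blast
  have "?B *v (u - v) = 0" using uv(2) by (simp add: matrix_vector_mult_diff_distrib)
  then have "lam *\<^sub>R (u - v) - A *v (u - v) = 0"
    by (simp add: matrix_vector_mult_diff_rdistrib scaleR_matrix_vector_assoc[symmetric])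
  then show ?thesis using uv(1) by (intro exI[of _ "u - v"]) auto
qed

lemma unit_eigvec_ok:
  fixes A :: "real^'n^'n"
  assumes "poly (charpoly A) lam = 0"
  shows "norm (unit_eigvec A lam) = 1 \<and> A *v unit_eigvec A lam = lam *\<^sub>R unit_eigvec A lam"
proof -
  obtain x where x: "x \<noteq> 0" "A *v x = lam *\<^sub>R x" using eigvec_from_root[OF assms] by blast
  define y where "y = (1 / norm x) *\<^sub>R x"
  have "norm y = 1 \<and> A *v y = lam *\<^sub>R y"
    using x unfolding y_def by (simp add: matrix_vector_mult_scaleR)
  then show ?thesis unfolding unit_eigvec_def by (rule someI)
qed

lemma eig_root:
  fixes A :: "real^'n^'n"
  assumes "eig_simple A k"
  shows "poly (charpoly A) (eig A k) = 0"
proof -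
  have len: "length (eigenvalues A) = CARD('n)" "1 \<le> k" "k \<le> CARD('n)"
    using assms unfolding eig_simple_def by auto
  have "eig A k \<in> set (eigenvalues A)" unfolding eig_def using len by simp
  then have mem: "eig A k \<in> set_mset (proots (charpoly A))"
    unfolding eigenvalues_def by simp
  have "charpoly A \<noteq> 0"
  proof
    assume "charpoly A = 0"
    then have "eigenvalues A = []" unfolding eigenvalues_def by simp
    then show False using len by simp
  qed
  then show ?thesis using mem by simp
qed


(* ---- W7 ---- *)


lemma gron:
  fixes g g' :: "real \<Rightarrow> real"
  assumes der: "\<And>t. t \<ge> 0 \<Longrightarrow> (g has_real_derivative g' t) (at t within {0..})"
    and nn: "\<And>t. t \<ge> 0 \<Longrightarrow> g t \<ge> 0" and g0: "g 0 = 0"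
    and loc: "\<And>t0. t0 \<ge> 0 \<Longrightarrow> g t0 = 0 \<Longrightarrow> \<exists>\<delta>>0. \<exists>C. \<forall>t. t0 \<le> t \<and> t < t0 + \<delta> \<longrightarrow> g' t \<le> C * g t"
    and t1: "t1 \<ge> 0"
  shows "g t1 = 0"
proof (rule ccontr)
  assume ne: "g t1 \<noteq> 0"
  have cont0: "continuous_on {0..} g" by (rule DERIV_continuous_on) (use der in auto)
  have cont: "continuous_on {0..t1} g" by (rule continuous_on_subset[OF cont0]) auto
  define S where "S = {0..t1} \<inter> g -` {0}"
  have clS: "closed S" unfolding S_def by (rule continuous_closed_preimage[OF cont]) auto
  have S0: "0 \<in> S" unfolding S_def using t1 g0 by auto
  have bS: "bdd_above S" unfolding S_def by (rule bdd_aboveI[of _ t1]) auto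
  define s where "s = Sup S"
  have sS: "s \<in> S" unfolding s_def using closed_contains_Sup[OF _ bS clS] S0 by blast
  then have s: "0 \<le> s" "s \<le> t1" "g s = 0" unfolding S_def by auto
  have st1: "s < t1" using s ne by (metis order_le_less)
  obtain \<delta> C where \<delta>: "\<delta> > 0" and C: "\<forall>t. s \<le> t \<and> t < s + \<delta> \<longrightarrow> g' t \<le> C * g t"
    using loc[OF s(1) s(3)] by blast
  define C' where "C' = max C 0"
  have C': "\<forall>t. s \<le> t \<and> t < s + \<delta> \<longrightarrow> g' t \<le> C' * g t"
  proof (intro allI impI)
    fix t assume t: "s \<le> t \<and> t < s + \<delta>"
    then have "g' t \<le> C * g t" using C by blast
    also have "\<dots> \<le> C' * g t" unfolding C'_def using nn[of t] s t by (intro mult_right_mono) auto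
    finally show "g' t \<le> C' * g t" .
  qed
  define t2 where "t2 = min t1 (s + \<delta>/2)"
  have t2: "s < t2" "t2 \<le> t1" "t2 < s + \<delta>" unfolding t2_def using st1 \<delta> by auto
  define h where "h u = g u * exp (- C' * u)" for u
  have hder: "(h has_real_derivative (g' u * exp (- C' * u) + g u * (- C' * exp (- C' * u)))) (at u)"
    if "u > 0" for u
  proof -
    have "(g has_real_derivative g' u) (at u)"
      using der[of u] that at_within_interior[of u "{0..}"] by simp
    then show ?thesis unfolding h_def
      by (auto intro!: derivative_eq_intros)
  qed
  have hcont: "continuous_on {s..t2} h"
    unfolding h_def
    by (intro continuous_intros continuous_on_subset[OF cont0]) (use s in auto)
  obtain l z where z: "s < z" "z < t2" "DERIV h z :> l" "h t2 - h s = (t2 - s) * l"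
    using MVT[OF t2(1) hcont] hder s
    by (metis differentiable_def has_field_derivative_imp_has_derivative less_le_trans order_le_less_trans)
  have "l = g' z * exp (- C' * z) + g z * (- C' * exp (- C' * z))"
    using DERIV_unique[OF z(3) hder] z s by simp
  also have "\<dots> = (g' z - C' * g z) * exp (- C' * z)" by (simp add: algebra_simps)
  also have "\<dots> \<le> 0"
    using C'[rule_format, of z] z t2 by (intro mult_nonpos_nonneg) auto
  finally have "l \<le> 0" .
  then have "h t2 \<le> h s" using z(4) t2 by (smt (verit) mult_nonneg_nonpos)
  moreover have "h s = 0" unfolding h_def using s by simp
  moreover have "h t2 \<ge> 0" unfolding h_def using nn[of t2] t2 s by simp
  ultimately have "g t2 * exp (- C' * t2) = 0" unfolding h_def by simp
  then have "g t2 = 0" by simp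
  then have "t2 \<in> S" unfolding S_def using t2 s by auto
  then have "t2 \<le> s" unfolding s_def using bS by (rule cSup_upper)
  then show False using t2 by simp
qed


(* ---- W8 ---- *)


lemma projS_add: "projS Ed (X + Z) = projS Ed X + projS Ed (Z::real^'n^'n)"
  by (simp add: projS_def vec_eq_iff)
lemma projS_scale: "projS Ed (c *\<^sub>R X) = c *\<^sub>R projS Ed (X::real^'n^'n)"
  by (simp add: projS_def vec_eq_iff)
lemma projS_minus: "projS Ed (- X) = - projS Ed (X::real^'n^'n)"
  by (simp add: projS_def vec_eq_iff)

lemma projS_bl: "bounded_linear (projS Ed :: real^'n^'n \<Rightarrow> real^'n^'n)"
  by (rule linear_conv_bounded_linear[THEN iffD1]) (rule linearI; simp add: projS_add projS_scale)

lemma projS_idem: "projS Ed (projS Ed X) = projS Ed (X::real^'n^'n)"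
  by (simp add: projS_def vec_eq_iff)

lemma projS_adj: "inner (projS Ed X) Z = inner X (projS Ed (Z::real^'n^'n))"
  unfolding inner_vec_def projS_def by (intro sum.cong refl) auto

lemma projS_norm: "norm (projS Ed X) \<le> norm (X::real^'n^'n)"
proof -
  have "(norm (projS Ed X))^2 = inner (projS Ed X) (projS Ed X)" by (simp add: power2_norm_eq_inner)
  also have "\<dots> = inner X (projS Ed (projS Ed X))" by (rule projS_adj)
  also have "\<dots> = inner X (projS Ed X)" by (simp add: projS_idem)
  also have "\<dots> \<le> norm X * norm (projS Ed X)" by (rule norm_cauchy_schwarz)
  finally have "norm (projS Ed X) * norm (projS Ed X) \<le> norm X * norm (projS Ed X)"
    by (simp add: power2_eq_square)
  then show ?thesis by (cases "norm (projS Ed X) = 0") (auto simp: mult_le_cancel_right)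
qed

lemma transpose_bl: "bounded_linear (transpose :: real^'n^'n \<Rightarrow> real^'n^'n)"
  by (rule linear_conv_bounded_linear[THEN iffD1]) (rule linearI; simp add: transpose_def vec_eq_iff)

lemma der_inner_self:
  fixes A :: "real \<Rightarrow> real^'n^'n"
  assumes "(A has_vector_derivative A') (at t within S)"
  shows "((\<lambda>t. inner (A t) (A t)) has_real_derivative (2 * inner (A t) A')) (at t within S)"
proof -
  have "((\<lambda>t. inner (A t) (A t)) has_vector_derivative (inner (A t) A' + inner A' (A t))) (at t within S)"
    by (rule bounded_bilinear.has_vector_derivative[OF bounded_bilinear_inner assms assms])
  then show ?thesis unfolding has_real_derivative_iff_has_vector_derivative
    by (simp add: inner_commute)
qed

lemma der_skew:
  fixes Y :: "real \<Rightarrow> real^'n^'n"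
  assumes "(Y has_vector_derivative D) (at t within S)"
  shows "((\<lambda>t. Y t - transpose (Y t)) has_vector_derivative (D - transpose D)) (at t within S)"
  by (intro has_vector_derivative_diff assms bounded_linear.has_vector_derivative[OF transpose_bl])

lemma der_projS:
  fixes Y :: "real \<Rightarrow> real^'n^'n"
  assumes "(Y has_vector_derivative D) (at t within S)"
  shows "((\<lambda>t. projS Ed (Y t)) has_vector_derivative projS Ed D) (at t within S)"
  by (rule bounded_linear.has_vector_derivative[OF projS_bl assms])


(* ---- W9 ---- *)


theorem proposition4p1:
  fixes Ed :: "('n::finite \<times> 'n) set"
    and W :: "real^'n^'n"
    and k :: nat and \<epsilon> :: real
    and Y :: "real \<Rightarrow> real^'n^'n"
    and Y0 :: "real^'n^'n"
  assumes Ed_sym: "\<And>i j. (i, j) \<in> Ed \<Longrightarrow> (j, i) \<in> Ed"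
    and W_sym: "transpose W = W"
    and W_nonneg: "\<And>i j. W $ i $ j \<ge> 0"
    and W_supp: "\<And>i j. (i, j) \<notin> Ed \<Longrightarrow> W $ i $ j = 0"
    and k_range: "2 \<le> k" "k \<le> CARD('n) - 1"
    and eps_pos: "\<epsilon> > 0"
    and rank4: "\<And>t. t \<ge> 0 \<Longrightarrow> rank (Y t) = 4"
    and ode: "\<And>t. t \<ge> 0 \<Longrightarrow>
       (Y has_vector_derivative
          (- tangent_proj (Y t) (Rmat W k \<epsilon> (projS Ed (Y t)))
           + (inner (tangent_proj (Y t) (Rmat W k \<epsilon> (projS Ed (Y t)))) (projS Ed (Y t)))
             *\<^sub>R Y t)) (at t within {0..})"
    and init: "Y 0 = Y0"
    and Y0_sym: "transpose Y0 = Y0"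
    and Y0_rank: "rank Y0 = 4"
    and simple: "\<And>t. t \<ge> 0 \<Longrightarrow>
       eig_simple (laplacian (W + \<epsilon> *\<^sub>R projS Ed (Y t))) k \<and>
       eig_simple (laplacian (W + \<epsilon> *\<^sub>R projS Ed (Y t))) (k + 1)"
  shows "(\<forall>t\<ge>0. transpose (Y t) = Y t \<and> rank (Y t) = 4) \<and>
         (norm (projS Ed Y0) = 1 \<longrightarrow> (\<forall>t\<ge>0. norm (projS Ed (Y t)) = 1))"
proof -
  let ?K = "real CARD('n)"
  define E where "E t = projS Ed (Y t)" for t
  define R where "R t = Rmat W k \<epsilon> (E t)" for t
  define T where "T t = tangent_proj (Y t) (R t)" for t
  define eta where "eta t = inner (T t) (E t)" for t
  define D where "D t = - T t + eta t *\<^sub>R Y t" for t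
  have der: "(Y has_vector_derivative D t) (at t within {0..})" if "t \<ge> 0" for t
    using ode[OF that] unfolding D_def eta_def T_def R_def E_def by simp
  have Rb: "norm (R t) \<le> 4 * ?K * ?K" if t: "t \<ge> 0" for t
  proof -
    let ?M = "laplacian (W + \<epsilon> *\<^sub>R E t)"
    have s1: "eig_simple ?M k" "eig_simple ?M (k+1)" using simple[OF t] unfolding E_def by auto
    show ?thesis unfolding R_def
      by (rule Rmat_bound)
        (use unit_eigvec_ok[OF eig_root[OF s1(1)]] unit_eigvec_ok[OF eig_root[OF s1(2)]] in auto)
  qed
  define cT where "cT = ?K * (2 * ?K * (4 * ?K * ?K))"
  have cT0: "cT \<ge> 0" unfolding cT_def by simp
  have Tb: "norm (T t) \<le> cT" if t: "t \<ge> 0" for t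
  proof -
    have "norm (T t) \<le> ?K * (2 * ?K * norm (R t))" unfolding T_def by (rule T_norm)
    also have "\<dots> \<le> cT" unfolding cT_def using Rb[OF t] by (intro mult_left_mono) auto
    finally show ?thesis .
  qed
  have etab: "\<bar>eta t\<bar> \<le> cT * norm (Y t)" if t: "t \<ge> 0" for t
  proof -
    have "\<bar>eta t\<bar> \<le> norm (T t) * norm (E t)" unfolding eta_def by (rule Cauchy_Schwarz_ineq2)
    also have "\<dots> \<le> cT * norm (Y t)"
      unfolding E_def using Tb[OF t] projS_norm cT0 by (intro mult_mono) auto
    finally show ?thesis .
  qed
  have near: "\<exists>\<delta>>0. \<forall>t. t0 \<le> t \<and> t < t0 + \<delta> \<longrightarrow> norm (Y t - Y t0) < e"
    if t0: "t0 \<ge> 0" and e: "e > 0" for t0 e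
  proof -
    have "continuous (at t0 within {0..}) Y" by (rule has_vector_derivative_continuous[OF der[OF t0]])
    then obtain \<delta> where \<delta>: "\<delta> > 0" "\<forall>x'\<in>{0..}. dist x' t0 < \<delta> \<longrightarrow> dist (Y x') (Y t0) < e"
      using e unfolding continuous_within_eps_delta by blast
    show ?thesis
    proof (intro exI[of _ \<delta>] conjI allI impI)
      fix t assume "t0 \<le> t \<and> t < t0 + \<delta>"
      then show "norm (Y t - Y t0) < e" using \<delta> t0 by (auto simp: dist_norm)
    qed (use \<delta> in auto)
  qed
  have Ynear: "norm (Y t) \<le> norm (Y t0) + 1" if "norm (Y t - Y t0) < 1" for t t0
    using that norm_triangle_ineq2[of "Y t" "Y t0"] by linarith

  (* symmetry *)
  define A where "A = (\<lambda>t. Y t - transpose (Y t))"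
  define g where "g = (\<lambda>t. inner (A t) (A t))"
  define g' where "g' = (\<lambda>t. 2 * inner (A t) (D t - transpose (D t)))"
  have gder: "(g has_real_derivative g' t) (at t within {0..})" if "t \<ge> 0" for t
    unfolding g_def g'_def A_def by (rule der_inner_self[OF der_skew[OF der[OF that]]])
  have gloc: "\<exists>\<delta>>0. \<exists>C. \<forall>t. t0 \<le> t \<and> t < t0 + \<delta> \<longrightarrow> g' t \<le> C * g t"
    if t0: "t0 \<ge> 0" "g t0 = 0" for t0
  proof -
    have "A t0 = 0" using t0(2) unfolding g_def by simp
    then have sym0: "transpose (Y t0) = Y t0" unfolding A_def by simp
    obtain \<delta>1 C1 where \<delta>1: "\<delta>1 > 0" "C1 \<ge> 0" and
      H: "\<forall>Z. rank Z = rank (Y t0) \<and> norm (Z - Y t0) < \<delta>1 \<longrightarrow>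
           (\<forall>v\<in>range ((*v) Z). \<exists>u. Z *v u = v \<and> norm u \<le> C1 * norm v)"
      using unif_rinv[of "Y t0"] by blast
    obtain \<delta> where \<delta>: "\<delta> > 0" "\<forall>t. t0 \<le> t \<and> t < t0 + \<delta> \<longrightarrow> norm (Y t - Y t0) < min \<delta>1 1"
      using near[OF t0(1), of "min \<delta>1 1"] \<delta>1 by auto
    define c2 where "c2 = ?K * (2 * (2 * ?K^3 * C1) * ?K * (4 * ?K * ?K))"
    define C where "C = 2 * c2 + 2 * (cT * (norm (Y t0) + 1))"
    show ?thesis
    proof (rule exI[of _ \<delta>], intro conjI exI[of _ C] allI impI)
      show "\<delta> > 0" by (rule \<delta>(1))
      fix t assume tt: "t0 \<le> t \<and> t < t0 + \<delta>"
      then have t: "t \<ge> 0" using t0 by simp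
      have cl: "norm (Y t - Y t0) < \<delta>1" "norm (Y t - Y t0) < 1" using \<delta>(2) tt by auto
      have rk: "rank (Y t) = rank (Y t0)" using rank4[OF t] rank4[OF t0(1)] by simp
      have inv2: "\<forall>v\<in>range ((*v) (Y t)). \<exists>u. Y t *v u = v \<and> norm u \<le> C1 * norm v"
        using H rk cl by blast
      have "transpose (Y t) - Y t0 = transpose (Y t - Y t0)"
        using sym0 by (simp add: transpose_diff_mat)
      then have "norm (transpose (Y t) - Y t0) = norm (Y t - Y t0)" by (simp add: norm_transpose_mat)
      then have inv1: "\<forall>v\<in>range ((*v) (transpose (Y t))). \<exists>u. transpose (Y t) *v u = v \<and> norm u \<le> C1 * norm v"
        using H rk cl by (simp add: rank_transpose)
      have Dl: "\<And>x. norm ((colproj (Y t) - colproj (transpose (Y t))) *v x)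
           \<le> (2 * ?K^3 * C1 * norm (A t)) * norm x"
        using delta_bound[OF inv1 inv2 \<delta>1(2)] unfolding A_def by (simp add: mult.assoc)
      have "norm (T t - transpose (T t)) \<le> ?K * (2 * (2 * ?K^3 * C1 * norm (A t)) * ?K * norm (R t))"
        unfolding T_def by (rule TT_bound[OF _ Dl]) (simp add: R_def Rmat_sym)
      also have "\<dots> \<le> ?K * (2 * (2 * ?K^3 * C1 * norm (A t)) * ?K * (4 * ?K * ?K))"
        using Rb[OF t] \<delta>1 by (intro mult_left_mono) auto
      also have "\<dots> = c2 * norm (A t)" unfolding c2_def by (simp add: algebra_simps)
      finally have TT: "norm (T t - transpose (T t)) \<le> c2 * norm (A t)" .
      have DD: "D t - transpose (D t) = - (T t - transpose (T t)) + eta t *\<^sub>R A t"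
        unfolding D_def A_def by (simp add: transpose_def vec_eq_iff algebra_simps)
      have g'eq: "g' t = - 2 * inner (A t) (T t - transpose (T t)) + 2 * eta t * g t"
        unfolding g'_def g_def DD by (simp add: inner_add_right algebra_simps)
      have 1: "- inner (A t) (T t - transpose (T t)) \<le> c2 * g t"
      proof -
        have "- inner (A t) (T t - transpose (T t)) \<le> norm (A t) * norm (T t - transpose (T t))"
          using Cauchy_Schwarz_ineq2[of "A t" "T t - transpose (T t)"] by linarith
        also have "\<dots> \<le> norm (A t) * (c2 * norm (A t))" by (intro mult_left_mono TT) auto
        also have "\<dots> = c2 * g t" unfolding g_def by (simp add: power2_norm_eq_inner[symmetric] power2_eq_square)
        finally show ?thesis .
      qed
      have 2: "eta t * g t \<le> (cT * (norm (Y t0) + 1)) * g t"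
      proof -
        have g0: "g t \<ge> 0" unfolding g_def by simp
        have "eta t \<le> cT * norm (Y t)" using etab[OF t] by linarith
        also have "\<dots> \<le> cT * (norm (Y t0) + 1)" using Ynear[OF cl(2)] cT0 by (intro mult_left_mono) auto
        finally show ?thesis using g0 by (intro mult_right_mono) auto
      qed
      show "g' t \<le> C * g t" unfolding g'eq C_def using 1 2 by (simp add: algebra_simps)
    qed
  qed
  have gzero: "g t = 0" if "t \<ge> 0" for t
  proof (rule gron[OF gder _ _ gloc that])
    show "g 0 = 0" unfolding g_def A_def using init Y0_sym by simp
  qed (auto simp: g_def)
  have symm: "transpose (Y t) = Y t" if "t \<ge> 0" for t
  proof -
    have "A t = 0" using gzero[OF that] unfolding g_def by simp
    then show ?thesis unfolding A_def by simp
  qed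

  (* norm *)
  define f where "f = (\<lambda>t. inner (E t) (E t) - 1)"
  define h where "h = (\<lambda>t. f t * f t)"
  define h' where "h' = (\<lambda>t. 4 * eta t * h t)"
  have fder: "(f has_real_derivative (2 * eta t * f t)) (at t within {0..})" if t: "t \<ge> 0" for t
  proof -
    have d1: "((\<lambda>t. inner (E t) (E t)) has_real_derivative 2 * inner (E t) (projS Ed (D t))) (at t within {0..})"
      unfolding E_def by (rule der_inner_self[OF der_projS[OF der[OF t]]])
    have "inner (E t) (projS Ed (T t)) = eta t"
      unfolding eta_def E_def projS_adj[symmetric] projS_idem by (metis projS_adj inner_commute)
    moreover have "projS Ed (D t) = eta t *\<^sub>R E t - projS Ed (T t)"
      unfolding D_def E_def by (simp add: projS_def vec_eq_iff)
    ultimately have "inner (E t) (projS Ed (D t)) = eta t * (f t + 1) - eta t"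
      unfolding f_def by (simp add: inner_diff_right)
    then have "2 * inner (E t) (projS Ed (D t)) = 2 * eta t * f t" by (simp add: algebra_simps)
    then have d2: "((\<lambda>t. inner (E t) (E t)) has_real_derivative 2 * eta t * f t) (at t within {0..})"
      using d1 by (simp add: mult.assoc)
    show ?thesis using DERIV_diff[OF d2 DERIV_const[of 1]] unfolding f_def by simp
  qed
  have hder: "(h has_real_derivative h' t) (at t within {0..})" if t: "t \<ge> 0" for t
  proof -
    have "(h has_real_derivative f t * (2 * eta t * f t) + (2 * eta t * f t) * f t) (at t within {0..})"
      unfolding h_def by (rule DERIV_mult'[OF fder[OF t] fder[OF t]])
    then show ?thesis unfolding h'_def h_def by (simp add: algebra_simps)
  qed
  have hloc: "\<exists>\<delta>>0. \<exists>C. \<forall>t. t0 \<le> t \<and> t < t0 + \<delta> \<longrightarrow> h' t \<le> C * h t"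
    if t0: "t0 \<ge> 0" "h t0 = 0" for t0
  proof -
    obtain \<delta> where \<delta>: "\<delta> > 0" "\<forall>t. t0 \<le> t \<and> t < t0 + \<delta> \<longrightarrow> norm (Y t - Y t0) < 1"
      using near[OF t0(1), of 1] by auto
    show ?thesis
    proof (rule exI[of _ \<delta>], intro conjI exI[of _ "4 * (cT * (norm (Y t0) + 1))"] allI impI)
      show "\<delta> > 0" by (rule \<delta>(1))
      fix t assume tt: "t0 \<le> t \<and> t < t0 + \<delta>"
      then have t: "t \<ge> 0" using t0 by simp
      have h0: "h t \<ge> 0" unfolding h_def by simp
      have "eta t \<le> cT * norm (Y t)" using etab[OF t] by linarith
      also have "\<dots> \<le> cT * (norm (Y t0) + 1)" using Ynear \<delta>(2) tt cT0 by (intro mult_left_mono) auto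
      finally have "eta t * h t \<le> (cT * (norm (Y t0) + 1)) * h t" using h0 by (intro mult_right_mono) auto
      then show "h' t \<le> 4 * (cT * (norm (Y t0) + 1)) * h t" unfolding h'_def by simp
    qed
  qed
  have normpart: "norm (projS Ed (Y t)) = 1" if n0: "norm (projS Ed Y0) = 1" and t: "t \<ge> 0" for t
  proof -
    have "h 0 = 0" unfolding h_def f_def E_def using n0 init
      by (simp add: power2_norm_eq_inner[symmetric])
    then have "h t = 0" by (intro gron[OF hder _ _ hloc t]) (auto simp: h_def)
    then have "inner (E t) (E t) = 1" unfolding h_def f_def by simp
    then have "(norm (E t))^2 = 1" by (simp add: power2_norm_eq_inner)
    then show ?thesis unfolding E_def using norm_ge_zero[of "projS Ed (Y t)"] by (simp add: power2_eq_1_iff)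
  qed
  show ?thesis using symm rank4 normpart by blast
qed


end
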